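(* Let $v_1\ge v_2>0$, $m\in\mathbb{Z}_{\ge1}$ and $0<b<m$. If a strategy profile $(X,Y)$ with $\mathbf{E}(X)=m$ and $\mathbf{E}(Y)=b$ is a Nash equilibrium of the discrete all-pay auction with valuations $v_1,v_2$, then $Y=\left(1-\frac bm\right)\delta_0+\frac bm Z$, where: (a) if $m=1$: $Z=\lambda_{\mathrm{O}}U_{\mathrm{O}}^1+\lambda_{\mathrm{E}}U_{\mathrm{E}}^1$ with $\lambda_{\mathrm{O}},\lambda_{\mathrm{E}}\ge0$, $\lambda_{\mathrm{O}}+\lambda_{\mathrm{E}}=1$, $\frac{\lambda_{\mathrm{E}}}{2}\ge1-\frac{2}{bv_1}$ and $\frac{\lambda_{\mathrm{E}}}{2}\le\frac1b-\frac{2}{bv_1}$; (b) if $m\ge2$: $Z=\lambda_{\mathrm{O}}U_{\mathrm{O}}^m+\lambda_{\mathrm{E}}U_{\mathrm{E}}^m+\lambda_{\mathrm{O}\uparrow1}U_{\mathrm{O}\uparrow1}^m+\sum_{j=1}^{m-1}\lambda_jW_j^m$ with $\lambda_{\mathrm{O}},\lambda_{\mathrm{E}},\lambda_{\mathrm{O}\uparrow1},\lambda_1,\dots,\lambda_{m-1}\ge0$, $\lambda_{\mathrm{O}}+\lambda_{\mathrm{E}}+\lambda_{\mathrm{O}\uparrow1}+\sum_{j=1}^{m-1}\lambda_j=1$, $\frac{\lambda_{\mathrm{E}}}{m+1}+\frac{1}{2m}\sum_{j=1}^{m-1}\lambda_j\le\frac mb\left(1-\frac{v_2}{v_1}\right)$,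 $\frac{\lambda_{\mathrm{O}}}{m}+\frac{\lambda_{\mathrm{E}}}{m+1}+\frac{\lambda_{\mathrm{O}\uparrow1}}{m-1}+\frac{1}{m}\sum_{j=1}^{m-1}\lambda_j=\frac{2m}{bv_1}$, and, in the case $b>m-1$, $\frac{1}{2m}\sum_{j=1}^{m-1}\lambda_j+\frac{\lambda_{\mathrm{O}\uparrow1}}{m-1}\le\frac{m-b}{b}$.
   Context: Discrete all-pay auction: two players, 1 and 2, value a prize at $v_1$ and $v_2$ respectively, where $v_1\ge v_2>0$. A (mixed) strategy is a probability distribution on $\mathbb{Z}_{\ge 0}$ with finite mean, identified with a $\mathbb{Z}_{\ge0}$-valued random variable; the two players' choices are independent. If player 1 uses $X$ and player 2 uses $Y$, the expected payoffs are $P^1(X,Y)=v_1\Pr(X>Y)+\frac{v_1}{2}\Pr(X=Y)-\mathbf{E}(X)$ and $P^2(Y,X)=v_2\Pr(Y>X)+\frac{v_2}{2}\Pr(X=Y)-\mathbf{E}(Y)$. A Nash equilibrium of the all-pay auction is a pair $(X,Y)$ with $P^1(X,Y)\ge P^1(X',Y)$ and $P^2(Y,X)\ge P^2(Y',X)$ for all strategies $X',Y'$. $\delta_j$ denotes the point mass at $j$; $\lambda A+(1-\lambda)B$ denotes the mixture of distributions $A$ and $B$ (similarly for longer convex combinations). Special distributions: for $m\ge1$, $U_{\mathrm{O}}^m$ is the uniform distribution on $\{1,3,\dots,2m-1\}$; for $m\ge0$, $U_{\mathrm{E}}^m$ is the uniform distribution on $\{0,2,\dots,2m\}$; for $m\ge2$,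 $U_{\mathrm{O}\uparrow1}^m$ is the uniform distribution on $\{2,4,\dots,2m-2\}$; for $m\ge2$ and $1\le j\le m-1$, $W_j^m=\frac{1}{2m}\delta_0+\sum_{i=1}^{j-1}\frac1m\delta_{2i}+\frac{1}{2m}\delta_{2j}+\sum_{i=j+1}^{m}\frac1m\delta_{2i-1}$. *)

theory Defs
  imports "HOL-Probability.Probability"
begin

definition strategy :: "nat pmf \<Rightarrow> bool" where
  "strategy X \<longleftrightarrow> integrable (measure_pmf X) real"

definition mean :: "nat pmf \<Rightarrow> real" where
  "mean X = measure_pmf.expectation X real"

definition payoff :: "real \<Rightarrow> nat pmf \<Rightarrow> nat pmf \<Rightarrow> real" where
  "payoff v X Y =
     v * measure_pmf.prob (pair_pmf X Y) {(x, y). x > y}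
   + v / 2 * measure_pmf.prob (pair_pmf X Y) {(x, y). x = y}
   - mean X"

definition nash_eq :: "real \<Rightarrow> real \<Rightarrow> nat pmf \<Rightarrow> nat pmf \<Rightarrow> bool" where
  "nash_eq v1 v2 X Y \<longleftrightarrow> strategy X \<and> strategy Y \<and>
     (\<forall>X'. strategy X' \<longrightarrow> payoff v1 X Y \<ge> payoff v1 X' Y) \<and>
     (\<forall>Y'. strategy Y' \<longrightarrow> payoff v2 Y X \<ge> payoff v2 Y' X)"

definition U_O :: "nat \<Rightarrow> nat \<Rightarrow> real" where
  "U_O m k = (if odd k \<and> k \<le> 2*m - 1 then 1 / real m else 0)"

definition U_E :: "nat \<Rightarrow> nat \<Rightarrow> real" where
  "U_E m k = (if even k \<and> k \<le> 2*m then 1 / real (m + 1) else 0)"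

definition U_Oup1 :: "nat \<Rightarrow> nat \<Rightarrow> real" where
  "U_Oup1 m k = (if even k \<and> 2 \<le> k \<and> k \<le> 2*m - 2 then 1 / (real m - 1) else 0)"

definition W :: "nat \<Rightarrow> nat \<Rightarrow> nat \<Rightarrow> real" where
  "W m j k =
     (if k = 0 then 1 / (2 * real m)
      else if even k \<and> 2 \<le> k \<and> k \<le> 2*j - 2 then 1 / real m
      else if k = 2*j then 1 / (2 * real m)
      else if odd k \<and> 2*j + 1 \<le> k \<and> k \<le> 2*m - 1 then 1 / real m
      else 0)"

end

theory Submission
  imports Defs
begin

lemma prob_pair_expect:
  fixes X :: "'a pmf" and Y :: "'b pmf"
  shows "measure_pmf.prob (pair_pmf X Y) S =
         measure_pmf.expectation X (\<lambda>x. measure_pmf.prob Y {y. (x,y) \<in> S})"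
proof -
  have e: "emeasure (measure_pmf (pair_pmf X Y)) S =
        (\<integral>\<^sup>+x. emeasure (measure_pmf Y) {y. (x,y) \<in> S} \<partial>X)"
    unfolding pair_pmf_def
    apply (simp add: emeasure_bind_pmf)
    apply (intro nn_integral_cong)
    apply (subst nn_integral_indicator[symmetric])
     apply simp
    apply (intro nn_integral_cong)
    apply (auto simp: indicator_def)
    done
  have i: "integrable X (\<lambda>x. measure_pmf.prob Y {y. (x,y) \<in> S})"
    by (rule measure_pmf.integrable_const_bound[where B=1]) auto
  have "ennreal (measure_pmf.prob (pair_pmf X Y) S) = emeasure (measure_pmf (pair_pmf X Y)) S"
    by (simp add: measure_pmf.emeasure_eq_measure)
  also have "\<dots> = (\<integral>\<^sup>+x. ennreal (measure_pmf.prob Y {y. (x,y) \<in> S}) \<partial>X)"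
    unfolding e by (simp add: measure_pmf.emeasure_eq_measure)
  also have "\<dots> = ennreal (measure_pmf.expectation X (\<lambda>x. measure_pmf.prob Y {y. (x,y) \<in> S}))"
    by (rule nn_integral_eq_integral[OF i]) auto
  finally show ?thesis by (simp add: integral_nonneg_AE)
qed

definition Fm :: "nat pmf \<Rightarrow> nat \<Rightarrow> real" where
  "Fm Y k = measure_pmf.prob Y {y. y < k} + pmf Y k / 2"

lemma Fm_bounds: "0 \<le> Fm Y k" "Fm Y k \<le> 1"
proof -
  have "measure_pmf.prob Y {y. y < k} + pmf Y k = measure_pmf.prob Y ({y. y < k} \<union> {k})"
    by (subst measure_pmf.finite_measure_Union) (auto simp: measure_pmf_single)
  also have "\<dots> \<le> 1" by simp
  finally show "Fm Y k \<le> 1" unfolding Fm_def using pmf_nonneg[of Y k] by linarith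
  show "0 \<le> Fm Y k" unfolding Fm_def by simp
qed

lemma strategy_return: "strategy (return_pmf k)"
  unfolding strategy_def by (rule integrable_measure_pmf_finite) simp

lemma payoff_return: "payoff v (return_pmf k) Y = v * Fm Y k - real k"
proof -
  have 1: "measure_pmf.prob (pair_pmf (return_pmf k) Y) {(x, y). x > y} = measure_pmf.prob Y {y. y < k}"
    by (simp add: pair_return_pmf1 vimage_def)
  have 2: "measure_pmf.prob (pair_pmf (return_pmf k) Y) {(x, y). x = y} = pmf Y k"
  proof -
    have "Pair k -` {(x, y). x = y} = {k}" by auto
    then show ?thesis by (simp add: pair_return_pmf1 measure_pmf_single)
  qed
  show ?thesis unfolding payoff_def mean_def Fm_def 1 2 by (simp add: algebra_simps)
qed

lemma payoff_expect:
  assumes "strategy X"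
  shows "payoff v X Y = measure_pmf.expectation X (\<lambda>x. v * Fm Y x - real x)"
proof -
  have a: "measure_pmf.prob (pair_pmf X Y) {(x, y). x > y} =
      measure_pmf.expectation X (\<lambda>x. measure_pmf.prob Y {y. y < x})"
    by (subst prob_pair_expect) simp
  have b: "measure_pmf.prob (pair_pmf X Y) {(x, y). x = y} =
      measure_pmf.expectation X (\<lambda>x. pmf Y x)"
  proof -
    have "\<And>x. {y. (x, y) \<in> {(x, y). x = y}} = {x}" by auto
    then show ?thesis by (subst prob_pair_expect) (simp add: measure_pmf_single)
  qed
  have i1: "integrable X (\<lambda>x. measure_pmf.prob Y {y. y < x})"
    by (rule measure_pmf.integrable_const_bound[where B=1]) auto
  have i2: "integrable X (\<lambda>x. pmf Y x)"
    by (rule measure_pmf.integrable_const_bound[where B=1]) (auto simp: pmf_le_1)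
  have i3: "integrable X (\<lambda>x. real x)" using assms unfolding strategy_def .
  have "measure_pmf.expectation X (\<lambda>x. v * Fm Y x - real x) =
     v * measure_pmf.expectation X (\<lambda>x. measure_pmf.prob Y {y. y < x})
     + v / 2 * measure_pmf.expectation X (\<lambda>x. pmf Y x) - measure_pmf.expectation X real"
    unfolding Fm_def using i1 i2 i3
    by (simp add: algebra_simps Bochner_Integration.integral_diff Bochner_Integration.integral_add)
  then show ?thesis unfolding payoff_def mean_def a b by simp
qed

lemma integrable_f:
  assumes "strategy X"
  shows "integrable X (\<lambda>x. v * Fm Y x - real x)"
proof -
  have i1: "integrable X (\<lambda>x. Fm Y x)"
    by (rule measure_pmf.integrable_const_bound[where B=1]) (auto simp: Fm_bounds)
  show ?thesis using i1 assms unfolding strategy_def by auto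
qed

lemma support_opt:
  fixes f :: "nat \<Rightarrow> real" and X :: "nat pmf"
  assumes "strategy X" and le: "\<And>k. f k \<le> a" and eq: "measure_pmf.expectation X f = a"
    and int: "integrable X f" and x: "x \<in> set_pmf X"
  shows "f x = a"
proof -
  have "measure_pmf.expectation X (\<lambda>k. a - f k) = 0"
  proof -
    have c: "measure_pmf.expectation X (\<lambda>k. a) = a" by (simp add: measure_pmf.prob_space)
    show ?thesis using eq int c by (simp add: Bochner_Integration.integral_diff)
  qed
  then have "AE k in X. a - f k = 0"
    using int le by (subst integral_nonneg_eq_0_iff_AE[symmetric]) (auto intro!: Bochner_Integration.integrable_diff)
  then show ?thesis using x by (auto simp: AE_measure_pmf_iff)
qed

lemma win_sum:
  fixes X Y :: "nat pmf"
  shows "measure_pmf.prob (pair_pmf X Y) {(x, y). x > y} + measure_pmf.prob (pair_pmf X Y) {(x, y). x = y} / 2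
       + (measure_pmf.prob (pair_pmf Y X) {(x, y). x > y} + measure_pmf.prob (pair_pmf Y X) {(x, y). x = y} / 2) = 1"
proof -
  let ?P = "measure_pmf.prob (pair_pmf X Y)"
  have v1: "(\<lambda>(x,y). (y,x)) -` {(x,y). x > y} = {(x::nat,y). x < y}" by auto
  have v2: "(\<lambda>(x,y). (y,x)) -` {(x,y). x = y} = {(x::nat,y). x = y}" by auto
  have s1: "measure_pmf.prob (pair_pmf Y X) {(x, y). x > y} = ?P {(x, y). x < y}"
    by (subst pair_commute_pmf) (simp only: measure_map_pmf v1)
  have s2: "measure_pmf.prob (pair_pmf Y X) {(x, y). x = y} = ?P {(x, y). x = y}"
    by (subst pair_commute_pmf) (simp only: measure_map_pmf v2)
  have "?P {(x, y). x > y} + ?P {(x, y). x < y} = ?P ({(x, y). x > y} \<union> {(x, y). x < y})"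
    by (subst measure_pmf.finite_measure_Union) auto
  also have "\<dots> + ?P {(x, y). x = y} = ?P (({(x, y). x > y} \<union> {(x, y). x < y}) \<union> {(x, y). x = y})"
    by (subst measure_pmf.finite_measure_Union) auto
  also have "({(x::nat, y). x > y} \<union> {(x, y). x < y}) \<union> {(x, y). x = y} = UNIV" by auto
  finally have "?P {(x, y). x > y} + ?P {(x, y). x < y} + ?P {(x, y). x = y} = 1" by simp
  then show ?thesis unfolding s1 s2 by simp
qed

definition phi :: "nat \<Rightarrow> nat \<Rightarrow> real" where
  "phi k y = (if y < k then 1 else if y = k then 1/2 else 0)"

lemma Fm_expect: "Fm Y k = measure_pmf.expectation Y (phi k)"
proof -
  have e: "phi k = (\<lambda>y. indicator {y. y < k} y + indicator {k} y / 2)"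
    by (auto simp: phi_def indicator_def fun_eq_iff)
  have i1: "integrable (measure_pmf Y) (\<lambda>y. indicat_real {y. y < k} y)"
    by (rule measure_pmf.integrable_const_bound[where B=1]) auto
  have i2: "integrable (measure_pmf Y) (\<lambda>y. indicat_real {k} y / 2)"
    by (rule measure_pmf.integrable_const_bound[where B=1]) (auto simp: indicator_def)
  have "measure_pmf.expectation Y (phi k) = measure_pmf.expectation Y (\<lambda>y. indicat_real {y. y < k} y)
      + measure_pmf.expectation Y (\<lambda>y. indicat_real {k} y / 2)"
    unfolding e by (rule Bochner_Integration.integral_add[OF i1 i2])
  also have "measure_pmf.expectation Y (\<lambda>y. indicat_real {k} y / 2) = measure_pmf.expectation Y (indicat_real {k}) / 2"
    by (rule integral_divide_zero)
  also have "measure_pmf.expectation Y (indicat_real {k}) = pmf Y k"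
    by (simp add: measure_pmf_single)
  also have "measure_pmf.expectation Y (\<lambda>y. indicat_real {y. y < k} y) = measure_pmf.prob Y {y. y < k}"
    by simp
  finally show ?thesis unfolding Fm_def by simp
qed

lemma phi_bounds: "0 \<le> phi k y" "phi k y \<le> 1" by (auto simp: phi_def)

lemma odd_sum: "(\<Sum>i<m. 2 * (1 - phi (2*i+1) y)) = real (min y (2*m))"
  by (induction m) (auto simp: phi_def)

lemma even_sum: "(\<Sum>i<Suc m. 2 * (1 - phi (2*i) y)) = real (min (y+1) (2*m+2))"
  by (induction m) (auto simp: phi_def)

lemma integrable_phi: "integrable (measure_pmf Y) (phi k)"
  by (rule measure_pmf.integrable_const_bound[where B=1]) (auto simp: phi_def)

lemma odd_ineq:
  assumes "strategy Y"
  shows "2 * (\<Sum>i<m. (1 - Fm Y (2*i+1))) \<le> mean Y"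
proof -
  have "2 * (\<Sum>i<m. (1 - Fm Y (2*i+1))) = (\<Sum>i<m. measure_pmf.expectation Y (\<lambda>y. 2 * (1 - phi (2*i+1) y)))"
    by (simp add: Fm_expect sum_distrib_left Bochner_Integration.integral_diff integrable_phi measure_pmf.prob_space)
  also have "\<dots> = measure_pmf.expectation Y (\<lambda>y. \<Sum>i<m. 2 * (1 - phi (2*i+1) y))"
    by (rule Bochner_Integration.integral_sum[symmetric]) (auto intro!: integrable_phi)
  also have "\<dots> = measure_pmf.expectation Y (\<lambda>y. real (min y (2*m)))"
    by (simp only: odd_sum)
  also have "\<dots> \<le> measure_pmf.expectation Y real"
    using assms unfolding strategy_def
    by (intro integral_mono) (auto intro!: measure_pmf.integrable_const_bound[where B="2*m"])
  finally show ?thesis unfolding mean_def .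
qed

lemma even_ineq:
  assumes "strategy Y"
  shows "2 * (\<Sum>i<Suc m. (1 - Fm Y (2*i))) \<le> mean Y + 1"
proof -
  have "2 * (\<Sum>i<Suc m. (1 - Fm Y (2*i))) = (\<Sum>i<Suc m. measure_pmf.expectation Y (\<lambda>y. 2 * (1 - phi (2*i) y)))"
    by (simp only: Fm_expect sum_distrib_left) (simp add: Bochner_Integration.integral_diff integrable_phi measure_pmf.prob_space)
  also have "\<dots> = measure_pmf.expectation Y (\<lambda>y. \<Sum>i<Suc m. 2 * (1 - phi (2*i) y))"
    by (rule Bochner_Integration.integral_sum[symmetric]) (auto intro!: integrable_phi)
  also have "\<dots> = measure_pmf.expectation Y (\<lambda>y. real (min (y+1) (2*m+2)))"
    by (simp only: even_sum)
  also have "\<dots> \<le> measure_pmf.expectation Y (\<lambda>y. real y + 1)"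
    using assms unfolding strategy_def
    by (intro integral_mono) (auto intro!: measure_pmf.integrable_const_bound[where B="2*m+2"])
  also have "\<dots> = mean Y + 1"
    using assms unfolding strategy_def mean_def by (simp add: measure_pmf.prob_space)
  finally show ?thesis .
qed

lemma key_alg:
  fixes A B al be b M :: real
  assumes A: "A > 0" and B: "B > 0" and al: "al \<ge> 0" and be: "be \<ge> 0"
    and b0: "0 < b" and bm: "b < M"
    and a: "B \<le> 2*be + 2*M"
    and bb: "A*b \<ge> 2*M*(A - al) - 2*M^2"
    and c: "B*M + A*b + B*al + A*be = A*B"
  shows "be = 0 \<and> B = 2*M"
proof -
  define y where "y = A - al"
  have c': "B*M + A*b = B*y - A*be" using c unfolding y_def by (simp add: algebra_simps)
  have bb': "A*b \<ge> 2*M*y - 2*M*M" using bb unfolding y_def by (simp add: power2_eq_square)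
  have key: "A*be \<le> (B - 2*M)*(y - M)"
  proof -
    have "(B - 2*M)*(y - M) = B*y - B*M - 2*M*y + 2*M*M" by (simp add: algebra_simps)
    then show ?thesis using c' bb' by linarith
  qed
  have Abe: "A*be \<ge> 0" using A be by simp
  have M0: "M > 0" using b0 bm by simp
  show ?thesis
  proof (cases "B < 2*M")
    case True
    have "y \<le> M"
    proof (rule ccontr)
      assume "\<not> y \<le> M"
      then have "(B - 2*M)*(y - M) < 0" using True by (intro mult_neg_pos) auto
      then show False using key Abe by linarith
    qed
    then have "B*(y - M) \<le> 0" using B by (simp add: mult_nonneg_nonpos)
    then have "A*b \<le> 0" using c' Abe by (simp add: algebra_simps)
    moreover have "A*b > 0" using A b0 by simp
    ultimately show ?thesis by linarith
  next
    case False
    have Ab: "A*b < A*M" using A bm by simp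
    have "2*(y - M)*M < A*M" using Ab bb' by (simp add: algebra_simps)
    then have "2*(y - M) < A" using M0 by simp
    then have ym2: "y - M < A/2" by simp
    show ?thesis
    proof (cases "B = 2*M")
      case True
      then have "A*be \<le> 0" using key by simp
      then have "A*be = 0" using Abe by linarith
      then have "be = 0" using A by simp
      then show ?thesis using True by simp
    next
      case Bne: False
      then have Bg: "B - 2*M > 0" using False by simp
      have "A*be < (B - 2*M)*(A/2)"
      proof (cases "y \<le> M")
        case True
        then have "(B - 2*M)*(y - M) \<le> 0" using Bg by (simp add: mult_nonneg_nonpos)
        moreover have "(B - 2*M)*(A/2) > 0" using Bg A by simp
        ultimately show ?thesis using key by linarith
      next
        case False
        have "(B - 2*M)*(y - M) < (B - 2*M)*(A/2)" using Bg ym2 by simp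
        then show ?thesis using key by simp
      qed
      then have "A*be < A*((B - 2*M)/2)" by (simp add: algebra_simps)
      then have "be < (B - 2*M)/2" using A by simp
      then show ?thesis using a by simp
    qed
  qed
qed

lemma W_zero: "W m j 0 = 1 / (2 * real m)" by (simp add: W_def)

lemma W_odd:
  assumes "1 \<le> i" "i \<le> m" "1 \<le> j"
  shows "W m j (2*i-1) = (if j < i then 1 / real m else 0)"
proof -
  have "2*i-1 \<noteq> 2*j" using assms by presburger
  moreover have "odd (2*i-1)" using assms by presburger
  ultimately show ?thesis using assms by (auto simp: W_def)
qed

lemma W_even:
  assumes "1 \<le> i" "1 \<le> j"
  shows "W m j (2*i) = (if i < j then 1 / real m else if i = j then 1 / (2 * real m) else 0)"
  using assms by (auto simp: W_def)

lemma W_big: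
  assumes "2*m < k" "j \<le> m - 1"
  shows "W m j k = 0"
  using assms by (auto simp: W_def)

lemma U_O_odd: "1 \<le> i \<Longrightarrow> i \<le> m \<Longrightarrow> U_O m (2*i-1) = 1 / real m"
  by (auto simp: U_O_def)
lemma U_O_even: "U_O m (2*i) = 0" by (auto simp: U_O_def)
lemma U_O_big: "2*m < k \<Longrightarrow> U_O m k = 0" by (auto simp: U_O_def)
lemma U_E_odd: "1 \<le> i \<Longrightarrow> U_E m (2*i-1) = 0" by (auto simp: U_E_def)
lemma U_E_even: "i \<le> m \<Longrightarrow> U_E m (2*i) = 1 / real (m+1)" by (auto simp: U_E_def)
lemma U_E_big: "2*m < k \<Longrightarrow> U_E m k = 0" by (auto simp: U_E_def)
lemma U_Oup1_odd: "1 \<le> i \<Longrightarrow> U_Oup1 m (2*i-1) = 0" by (auto simp: U_Oup1_def)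
lemma U_Oup1_even: "1 \<le> i \<Longrightarrow> U_Oup1 m (2*i) = (if i < m then 1 / (real m - 1) else 0)"
  by (auto simp: U_Oup1_def)
lemma U_Oup1_zero: "U_Oup1 m 0 = 0" by (auto simp: U_Oup1_def)
lemma U_Oup1_big: "2*m < k \<Longrightarrow> U_Oup1 m k = 0" by (auto simp: U_Oup1_def)

lemma sum_odd_W:
  assumes "1 \<le> i" "i \<le> m"
  shows "(\<Sum>j=1..m-1. l j * W m j (2*i-1)) = (\<Sum>j\<in>{1..<i}. l j) / real m"
proof -
  have "(\<Sum>j=1..m-1. l j * W m j (2*i-1)) = (\<Sum>j\<in>{1..<m}. l j * (if j < i then 1 / real m else 0))"
  proof (rule sum.cong)
    show "{1..m-1} = {1..<m}" using assms by auto
  next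
    fix j assume "j \<in> {1..<m}"
    then have "1 \<le> j" by simp
    then show "l j * W m j (2*i-1) = l j * (if j < i then 1 / real m else 0)"
      using W_odd[OF assms \<open>1 \<le> j\<close>] by simp
  qed
  also have "\<dots> = (\<Sum>j\<in>{1..<i}. l j * (if j < i then 1 / real m else 0))
                 + (\<Sum>j\<in>{i..<m}. l j * (if j < i then 1 / real m else 0))"
    using assms by (intro sum.atLeastLessThan_concat[symmetric]) auto
  also have "(\<Sum>j\<in>{i..<m}. l j * (if j < i then 1 / real m else 0)) = 0"
    by (intro sum.neutral) auto
  also have "(\<Sum>j\<in>{1..<i}. l j * (if j < i then 1 / real m else 0)) = (\<Sum>j\<in>{1..<i}. l j / real m)"
    by (intro sum.cong) auto
  finally show ?thesis by (simp add: sum_divide_distrib)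
qed

lemma sum_even_W:
  assumes "1 \<le> i" "i < m"
  shows "(\<Sum>j=1..m-1. l j * W m j (2*i)) = (\<Sum>j\<in>{Suc i..<m}. l j) / real m + l i / (2 * real m)"
proof -
  let ?w = "\<lambda>j. (if i < j then 1 / real m else if i = j then 1 / (2 * real m) else 0)"
  have "(\<Sum>j=1..m-1. l j * W m j (2*i)) = (\<Sum>j\<in>{1..<m}. l j * ?w j)"
  proof (rule sum.cong)
    show "{1..m-1} = {1..<m}" using assms by auto
  next
    fix j assume "j \<in> {1..<m}"
    then have "1 \<le> j" by simp
    then show "l j * W m j (2*i) = l j * ?w j"
      using W_even[OF assms(1) \<open>1 \<le> j\<close>] by simp
  qed
  also have "\<dots> = (\<Sum>j\<in>{1..<i}. l j * ?w j) + (\<Sum>j\<in>{i..<m}. l j * ?w j)"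
    using assms by (intro sum.atLeastLessThan_concat[symmetric]) auto
  also have "(\<Sum>j\<in>{1..<i}. l j * ?w j) = 0"
    by (intro sum.neutral) auto
  also have "(\<Sum>j\<in>{i..<m}. l j * ?w j) = l i * ?w i + (\<Sum>j\<in>{Suc i..<m}. l j * ?w j)"
    using assms by (intro sum.atLeast_Suc_lessThan)
  also have "(\<Sum>j\<in>{Suc i..<m}. l j * ?w j) = (\<Sum>j\<in>{Suc i..<m}. l j / real m)"
    by (intro sum.cong) auto
  finally show ?thesis by (simp add: sum_divide_distrib)
qed

lemma sum_even_W_m:
  "(\<Sum>j=1..m-1. l j * W m j (2*m)) = 0"
  by (intro sum.neutral) (auto simp: W_def)

lemma sum_zero_W:
  "(\<Sum>j=1..m-1. l j * W m j 0) = (\<Sum>j=1..m-1. l j) / (2 * real m)"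
  by (simp add: W_zero sum_divide_distrib)

lemma sum_big_W:
  assumes "2*m < k"
  shows "(\<Sum>j=1..m-1. l j * W m j k) = 0"
  using assms by (intro sum.neutral) (auto simp: W_big)

lemma alg_main:
  fixes A b al :: real and m :: nat and q :: "nat \<Rightarrow> real"
  assumes A: "A > 0" and m2: "m \<ge> 2" and b0: "b > 0"
    and qnn: "\<And>k. q k \<ge> 0" and qz: "\<And>k. k > 2*m \<Longrightarrow> q k = 0"
    and alv: "al = A - real m - A*b/(2*real m)"
    and E: "\<And>i. 1 \<le> i \<Longrightarrow> i < m \<Longrightarrow> q(2*i-1) + 2*q(2*i) + q(2*i+1) = 4/A"
    and I: "\<And>i. 1 \<le> i \<Longrightarrow> i \<le> m \<Longrightarrow> q(2*i-1) + q(2*i) \<le> 2/A"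
    and Q1: "A*(q 0 + q 1/2) - 1 = al"
    and Qc: "A*(1 - q(2*m) - q(2*m-1)/2) - (2*real m-1) = al"
    and F0: "A*q 0/2 \<le> al"
  shows "\<exists>lO lE lOu :: real. \<exists>l :: nat \<Rightarrow> real.
               lO \<ge> 0 \<and> lE \<ge> 0 \<and> lOu \<ge> 0 \<and> (\<forall>j\<in>{1..m-1}. l j \<ge> 0) \<and>
               lO + lE + lOu + (\<Sum>j=1..m-1. l j) = 1 \<and>
               lE / real (m + 1) + 1 / (2 * real m) * (\<Sum>j=1..m-1. l j)
                 \<le> real m / b * (1 - (2 * real m) / A) \<and>
               lO / real m + lE / real (m + 1) + lOu / (real m - 1)
                 + 1 / real m * (\<Sum>j=1..m-1. l j) = 2 * real m / (b * A) \<and>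
               (b > real m - 1 \<longrightarrow>
                  1 / (2 * real m) * (\<Sum>j=1..m-1. l j) + lOu / (real m - 1)
                    \<le> (real m - b) / b) \<and>
               (\<forall>k. q k = (1 - b / real m) * (if k = 0 then 1 else 0)
                    + b / real m * (lO * U_O m k + lE * U_E m k + lOu * U_Oup1 m k
                                    + (\<Sum>j=1..m-1. l j * W m j k)))"
proof -
  define c where "c = b / real m"
  define D where "D j = 2/A - q(2*j-1) - q(2*j)" for j
  define S where "S = (\<Sum>j\<in>{1..<m}. D j)"
  have m0: "real m > 0" using m2 by simp
  have m1: "real m - 1 > 0" using m2 by simp
  have c0: "c > 0" using b0 m0 unfolding c_def by simp
  have Dnn: "\<And>j. 1 \<le> j \<Longrightarrow> j \<le> m \<Longrightarrow> D j \<ge> 0" using I unfolding D_def by fastforce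
  have odd: "q(2*(n+1)-1) = q 1 + 2*(\<Sum>j\<in>{1..<n+1}. D j)" if "n+1 \<le> m" for n
    using that
  proof (induction n)
    case 0 then show ?case by simp
  next
    case (Suc n)
    have e: "q(2*(n+1)-1) + 2*q(2*(n+1)) + q(2*(n+1)+1) = 4/A" using E[of "n+1"] Suc.prems by simp
    have "q(2*(Suc n+1)-1) = q(2*(n+1)+1)" by (simp add: algebra_simps)
    also have "\<dots> = q(2*(n+1)-1) + 2*D (n+1)" using e unfolding D_def by (simp add: algebra_simps)
    also have "\<dots> = q 1 + 2*(\<Sum>j\<in>{1..<Suc n+1}. D j)"
      using Suc by (simp add: algebra_simps)
    finally show ?case .
  qed
  have oddi: "q(2*i-1) = q 1 + 2*(\<Sum>j\<in>{1..<i}. D j)" if "1 \<le> i" "i \<le> m" for i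
    using odd[of "i-1"] that by simp
  have qm1: "q(2*m-1) = q 1 + 2*S" using oddi[of m] m2 unfolding S_def by simp
  have hc: "c = q(2*m-1) + 2*q(2*m) + 2*(real m-1)/A"
  proof -
    have "A*b/(2*real m) = A*q(2*m) + A*q(2*m-1)/2 + real m - 1"
      using Qc alv by (simp add: algebra_simps)
    then have "A * c = A*(q(2*m-1) + 2*q(2*m)) + 2*(real m - 1)"
      unfolding c_def using m0 c0 by (simp add: field_simps)
    then show ?thesis using A by (simp add: field_simps)
  qed
  have hq0: "q 0 = 1 - c + q(2*m) + S"
  proof -
    have "A*q 0 = A - real m - A*c/2 + 1 - A * q 1 / 2"
      using Q1 alv unfolding c_def by (simp add: algebra_simps)
    then have "q 0 = 1 - (real m - 1)/A - c/2 - q 1/2" using A by (simp add: field_simps)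
    moreover have "2*(real m-1)/A = 2*((real m-1)/A)" by simp
    ultimately show ?thesis using hc qm1 by linarith
  qed
  have Dm: "D m = 2/A - q 1 - 2*S - q(2*m)" unfolding D_def using qm1 by simp
  define lO where "lO = real m * q 1 / c"
  define lE where "lE = real (m+1) * q(2*m) / c"
  define lOu where "lOu = (real m - 1) * D m / c"
  define l where "l j = 2 * real m * D j / c" for j
  have sumI: "{1..m-1} = {1..<m}" using m2 by auto
  have lEd: "lE / real (m + 1) = q(2*m) / c"
  proof -
    have p: "real (m+1) \<noteq> 0" by simp
    have "lE / real (m+1) = (real (m+1) * (q(2*m) / c)) / real (m+1)" unfolding lE_def by simp
    also have "\<dots> = q(2*m)/c" by (rule nonzero_mult_div_cancel_left[OF p])
    finally show ?thesis .
  qed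
  have suml: "(\<Sum>j=1..m-1. l j) = 2 * real m * S / c"
    unfolding sumI S_def l_def by (simp add: sum_divide_distrib sum_distrib_left)
  show ?thesis
  proof (intro exI conjI)
    show "lO \<ge> 0" unfolding lO_def using qnn c0 by simp
    show "lE \<ge> 0" unfolding lE_def using qnn c0 by simp
    show "lOu \<ge> 0" unfolding lOu_def using Dnn[of m] m2 c0 m1 by simp
    show "\<forall>j\<in>{1..m-1}. l j \<ge> 0" unfolding l_def using Dnn c0 by auto
    show "lO + lE + lOu + (\<Sum>j=1..m-1. l j) = 1"
    proof -
      have "real m * q 1 + real (m+1) * q(2*m) + (real m - 1) * D m + 2 * real m * S = c"
        unfolding Dm hc qm1 using A by (simp add: field_simps)
      moreover have "lO + lE + lOu + (\<Sum>j=1..m-1. l j) = (real m * q 1 + real (m+1) * q(2*m) + (real m - 1) * D m + 2 * real m * S) / c"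
        unfolding suml lO_def lE_def lOu_def by (simp add: add_divide_distrib)
      ultimately show ?thesis using c0 by simp
    qed
    show "lE / real (m + 1) + 1 / (2 * real m) * (\<Sum>j=1..m-1. l j) \<le> real m / b * (1 - (2 * real m) / A)"
    proof -
      have "q 0 \<le> 2 - 2*real m/A - c"
        using F0 alv A unfolding c_def by (simp add: field_simps)
      then have "q(2*m) + S \<le> 1 - 2*real m/A" using hq0 by simp
      then have "(q(2*m) + S) / c \<le> (1 - 2*real m/A) / c" using c0 by (simp add: divide_right_mono)
      moreover have "lE / real (m + 1) + 1 / (2 * real m) * (\<Sum>j=1..m-1. l j) = (q(2*m) + S) / c"
        unfolding suml lEd using m0 c0 by (simp add: field_simps)
      moreover have "real m / b = 1 / c" unfolding c_def by simp
      ultimately show ?thesis by simp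
    qed
    show "lO / real m + lE / real (m + 1) + lOu / (real m - 1) + 1 / real m * (\<Sum>j=1..m-1. l j)
          = 2 * real m / (b * A)"
    proof -
      have "lO / real m + lE / real (m + 1) + lOu / (real m - 1) + 1 / real m * (\<Sum>j=1..m-1. l j)
          = (q 1 + q(2*m) + D m + 2*S) / c"
        unfolding suml lO_def lEd lOu_def using m0 m1 c0 by (simp add: field_simps)
      also have "q 1 + q(2*m) + D m + 2*S = 2/A" unfolding Dm by simp
      finally show ?thesis unfolding c_def using m0 c0 by (simp add: field_simps)
    qed
    show "b > real m - 1 \<longrightarrow> 1 / (2 * real m) * (\<Sum>j=1..m-1. l j) + lOu / (real m - 1) \<le> (real m - b) / b"
    proof
      have "A*q 0/2 \<le> A*(q 0 + q 1/2) - 1" using F0 Q1 by simp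
      then have "q 0 + q 1 \<ge> 2/A" using A by (simp add: field_simps)
      then have "S + D m \<le> 1 - c" using hq0 Dm by simp
      then have "(S + D m)/c \<le> (1 - c)/c" using c0 by (simp add: divide_right_mono)
      moreover have "1 / (2 * real m) * (\<Sum>j=1..m-1. l j) + lOu / (real m - 1) = (S + D m)/c"
        unfolding suml lOu_def using m0 m1 c0 by (simp add: field_simps)
      moreover have "(real m - b) / b = (1 - c)/c" unfolding c_def using m0 b0 by (simp add: field_simps)
      ultimately show "1 / (2 * real m) * (\<Sum>j=1..m-1. l j) + lOu / (real m - 1) \<le> (real m - b) / b"
        by simp
    qed
    show "\<forall>k. q k = (1 - b / real m) * (if k = 0 then 1 else 0)
                    + b / real m * (lO * U_O m k + lE * U_E m k + lOu * U_Oup1 m k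
                                    + (\<Sum>j=1..m-1. l j * W m j k))"
    proof
      fix k
      have bc: "b / real m = c" unfolding c_def ..
      have cne: "c \<noteq> 0" using c0 by simp
      have sumD: "(\<Sum>j\<in>{a..<d}. l j) = 2 * real m * (\<Sum>j\<in>{a..<d}. D j) / c" for a d
        unfolding l_def by (simp add: sum_divide_distrib sum_distrib_left)
      consider (z) "k = 0" | (big) "2*m < k" | (od) i where "1 \<le> i" "i \<le> m" "k = 2*i-1"
        | (ev) i where "1 \<le> i" "i \<le> m" "k = 2*i"
      proof -
        consider "k = 0" | "2*m < k" | "0 < k \<and> k \<le> 2*m \<and> odd k" | "0 < k \<and> k \<le> 2*m \<and> even k"
          by linarith
        then show thesis
        proof cases
          case 3
          then obtain i where "k = 2*i+1" by (auto elim: oddE)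
          then show thesis using 3 by (intro that(3)[of "i+1"]) auto
        next
          case 4
          then obtain i where "k = 2*i" by (auto elim: evenE)
          then show thesis using 4 by (intro that(4)[of i]) auto
        qed (use that in auto)
      qed
      then show "q k = (1 - b / real m) * (if k = 0 then 1 else 0)
                    + b / real m * (lO * U_O m k + lE * U_E m k + lOu * U_Oup1 m k
                                    + (\<Sum>j=1..m-1. l j * W m j k))"
      proof cases
        case z
        have u: "U_O m 0 = 0" "U_E m 0 = 1 / real (m+1)" "U_Oup1 m 0 = 0"
          by (simp_all add: U_O_def U_E_def U_Oup1_def)
        have "c * (lE * (1 / real (m+1))) = q(2*m)" using lEd cne by simp
        moreover have "c * ((\<Sum>j=1..m-1. l j) / (2 * real m)) = S" unfolding suml using cne m0 by simp
        ultimately have "c * (lE * (1 / real (m+1)) + (\<Sum>j=1..m-1. l j) / (2 * real m)) = q(2*m) + S"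
          by (simp add: distrib_left)
        then show ?thesis unfolding z bc u sum_zero_W using hq0 by simp
      next
        case big
        then show ?thesis unfolding sum_big_W[OF big] using qz[OF big] by (simp add: U_O_big U_E_big U_Oup1_big)
      next
        case od
        have u: "U_O m k = 1 / real m" "U_E m k = 0" "U_Oup1 m k = 0"
          unfolding od(3) using U_O_odd[OF od(1,2)] U_E_odd[OF od(1)] U_Oup1_odd[OF od(1)] by simp_all
        have k0: "k \<noteq> 0" using od by simp
        have "c * (lO * (1 / real m) + (\<Sum>j\<in>{1..<i}. l j) / real m) = q 1 + 2 * (\<Sum>j\<in>{1..<i}. D j)"
          unfolding sumD lO_def using cne m0 by (simp add: field_simps)
        also have "\<dots> = q k" using oddi[OF od(1,2)] od(3) by simp
        finally show ?thesis unfolding bc u using k0 od sum_odd_W[OF od(1,2), of l] by simp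
      next
        case ev
        have k0: "k \<noteq> 0" using ev by simp
        have uO: "U_O m k = 0" "U_E m k = 1 / real (m+1)" using ev by (simp_all add: U_O_even U_E_even)
        show ?thesis
        proof (cases "i = m")
          case True
          have "U_Oup1 m k = 0" using ev True by (simp add: U_Oup1_even)
          moreover have "(\<Sum>j=1..m-1. l j * W m j k) = 0" using ev True sum_even_W_m by simp
          moreover have "c * (lE * (1 / real (m+1))) = q k" using lEd cne ev True by simp
          ultimately show ?thesis unfolding bc uO using k0 by simp
        next
          case False
          then have im: "i < m" using ev by simp
          have uu: "U_Oup1 m k = 1 / (real m - 1)" using ev im by (simp add: U_Oup1_even)
          have ws: "(\<Sum>j=1..m-1. l j * W m j k) = (\<Sum>j\<in>{Suc i..<m}. l j) / real m + l i / (2 * real m)"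
            using sum_even_W[OF ev(1) im] ev by simp
          have Ssplit: "S = (\<Sum>j\<in>{1..<i}. D j) + D i + (\<Sum>j\<in>{Suc i..<m}. D j)"
          proof -
            have "S = (\<Sum>j\<in>{1..<i}. D j) + (\<Sum>j\<in>{i..<m}. D j)"
              unfolding S_def using ev im by (intro sum.atLeastLessThan_concat[symmetric]) auto
            also have "(\<Sum>j\<in>{i..<m}. D j) = D i + (\<Sum>j\<in>{Suc i..<m}. D j)"
              using im by (intro sum.atLeast_Suc_lessThan)
            finally show ?thesis by simp
          qed
          have lhs: "q k = 2/A - D i - q 1 - 2 * (\<Sum>j\<in>{1..<i}. D j)"
            using oddi[OF ev(1,2)] ev(3) unfolding D_def by simp
          have "c * (lE * (1 / real (m+1)) + lOu * (1 / (real m - 1))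
                 + ((\<Sum>j\<in>{Suc i..<m}. l j) / real m + l i / (2 * real m)))
                = q(2*m) + D m + 2 * (\<Sum>j\<in>{Suc i..<m}. D j) + D i"
          proof -
            have a1: "c * (lE * (1 / real (m+1))) = q(2*m)" using lEd cne by simp
            have a2: "c * (lOu * (1 / (real m - 1))) = D m" unfolding lOu_def using cne m1 by simp
            have a3: "c * ((\<Sum>j\<in>{Suc i..<m}. l j) / real m) = 2 * (\<Sum>j\<in>{Suc i..<m}. D j)"
              unfolding sumD using cne m0 by simp
            have a4: "c * (l i / (2 * real m)) = D i" unfolding l_def using cne m0 by simp
            show ?thesis using a1 a2 a3 a4 by (simp add: distrib_left)
          qed
          also have "\<dots> = q k" using lhs Ssplit Dm by simp
          finally show ?thesis unfolding bc uO uu ws using k0 by simp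
        qed
      qed
    qed
  qed
qed

lemma alg_one:
  fixes A b al :: real and m :: nat and q :: "nat \<Rightarrow> real"
  assumes m1: "m = 1" and A: "A > 0" and b0: "b > 0"
    and qnn: "\<And>k. q k \<ge> 0" and qz: "\<And>k. k > 2 \<Longrightarrow> q k = 0"
    and alv: "al = A - 1 - A*b/2"
    and I: "q 1 + q 2 \<le> 2/A"
    and Q1: "A*(q 0 + q 1/2) - 1 = al"
    and Qc: "A*(1 - q 2 - q 1/2) - 1 = al"
    and F0: "A*q 0/2 \<le> al"
  shows "\<exists>lO lE :: real. lO \<ge> 0 \<and> lE \<ge> 0 \<and> lO + lE = 1 \<and>
               lE / 2 \<ge> 1 - 2 / (b * A) \<and>
               lE / 2 \<le> 1 / b - 2 / (b * A) \<and>
               (\<forall>k. q k = (1 - b / real m) * (if k = 0 then 1 else 0)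
                    + b / real m * (lO * U_O 1 k + lE * U_E 1 k))"
proof -
  have hb: "b = 2 * q 2 + q 1"
  proof -
    have "A * b = A * (2 * q 2 + q 1)" using Qc alv by (simp add: algebra_simps)
    then show ?thesis using A by simp
  qed
  have hq0: "q 0 = 1 - q 1 - q 2"
  proof -
    have "A * q 0 = A * (1 - q 1 - q 2)" using Q1 alv hb by (simp add: field_simps)
    then show ?thesis using A by simp
  qed
  have F01: "q 0 + q 1 \<ge> 2/A"
  proof -
    have "A*q 0/2 \<le> A*(q 0 + q 1/2) - 1" using F0 Q1 by simp
    then show ?thesis using A by (simp add: field_simps)
  qed
  show ?thesis
  proof (intro exI conjI)
    show "q 1 / b \<ge> 0" using qnn b0 by simp
    show "2 * q 2 / b \<ge> 0" using qnn b0 by simp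
    show "q 1 / b + 2 * q 2 / b = 1"
    proof -
      have "q 1 / b + 2 * q 2 / b = (q 1 + 2 * q 2) / b" by (simp add: add_divide_distrib)
      also have "\<dots> = 1" using hb b0 by simp
      finally show ?thesis .
    qed
    show "2 * q 2 / b / 2 \<ge> 1 - 2 / (b * A)"
    proof -
      have "q 2 \<ge> b - 2/A" using I hb by simp
      then have "q 2 / b \<ge> (b - 2/A)/b" using b0 by (simp add: divide_right_mono)
      moreover have "(b - 2/A)/b = 1 - 2 / (b * A)" using b0 A by (simp add: field_simps)
      ultimately show ?thesis by simp
    qed
    show "2 * q 2 / b / 2 \<le> 1 / b - 2 / (b * A)"
    proof -
      have "q 2 \<le> 1 - 2/A" using F01 hq0 by simp
      then have "q 2 / b \<le> (1 - 2/A)/b" using b0 by (simp add: divide_right_mono)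
      moreover have "(1 - 2/A)/b = 1 / b - 2 / (b * A)" using b0 A by (simp add: field_simps)
      ultimately show ?thesis by simp
    qed
    show "\<forall>k. q k = (1 - b / real m) * (if k = 0 then 1 else 0)
                    + b / real m * (q 1 / b * U_O 1 k + 2 * q 2 / b * U_E 1 k)"
    proof
      fix k :: nat
      consider "k = 0" | "k = 1" | "k = 2" | "k > 2" by linarith
      then show "q k = (1 - b / real m) * (if k = 0 then 1 else 0)
                    + b / real m * (q 1 / b * U_O 1 k + 2 * q 2 / b * U_E 1 k)"
      proof cases
        case 1
        have U: "U_O 1 0 = 0" "U_E 1 0 = 1/2" by (simp_all add: U_O_def U_E_def)
        have e: "b * (q 1 / b * 0 + 2 * q 2 / b * (1/2)) = q 2" using b0 by simp
        have "(1 - b / real m) * (if k = 0 then 1 else 0) + b / real m * (q 1 / b * U_O 1 k + 2 * q 2 / b * U_E 1 k)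
            = 1 - b + q 2" unfolding 1 U m1 using e by simp
        then show ?thesis using hq0 hb 1 by simp
      next
        case 2 then show ?thesis using m1 b0 by (simp add: U_O_def U_E_def field_simps)
      next
        case 3 then show ?thesis using m1 b0 by (simp add: U_O_def U_E_def field_simps)
      next
        case 4 then show ?thesis using m1 b0 qz[OF 4] by (simp add: U_O_def U_E_def)
      qed
    qed
  qed
qed

lemma Fm_step: "Fm Y (Suc k) = Fm Y k + (pmf Y k + pmf Y (Suc k)) / 2"
proof -
  have "measure_pmf.prob Y {y. y < Suc k} = measure_pmf.prob Y ({y. y < k} \<union> {k})"
    by (intro arg_cong[where f="measure_pmf.prob Y"]) auto
  also have "\<dots> = measure_pmf.prob Y {y. y < k} + pmf Y k"
    by (subst measure_pmf.finite_measure_Union) (auto simp: measure_pmf_single)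
  finally show ?thesis unfolding Fm_def by (simp add: field_simps)
qed

lemma Fm_zero: "Fm Y 0 = pmf Y 0 / 2"
  unfolding Fm_def by simp

lemma Fm_top:
  assumes "\<And>y. y \<in> set_pmf Y \<Longrightarrow> y \<le> n"
  shows "Fm Y n = 1 - pmf Y n / 2"
proof -
  have "measure_pmf.prob Y {y. y < Suc n} = 1"
    using assms by (subst measure_pmf.prob_eq_1) (auto simp: AE_measure_pmf_iff less_Suc_eq_le)
  moreover have "measure_pmf.prob Y {y. y < Suc n} = measure_pmf.prob Y ({y. y < n} \<union> {n})"
    by (intro arg_cong[where f="measure_pmf.prob Y"]) auto
  moreover have "measure_pmf.prob Y ({y. y < n} \<union> {n}) = measure_pmf.prob Y {y. y < n} + pmf Y n"
    by (subst measure_pmf.finite_measure_Union) (auto simp: measure_pmf_single)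
  ultimately show ?thesis unfolding Fm_def by simp
qed

lemma sum_lin:
  fixes a B :: real
  shows "(\<Sum>i<n. (1 - (a + 2 * real i) / B)) = real n - (real n * a + real n * (real n - 1)) / B"
  by (induction n) (auto simp: divide_inverse algebra_simps)

theorem lemma2:
  fixes v1 v2 b :: real and m :: nat and X Y :: "nat pmf"
  assumes "v1 \<ge> v2" and "v2 > 0"
    and "m \<ge> 1" and "0 < b" and "b < real m"
    and "mean X = real m" and "mean Y = b"
    and "nash_eq v1 v2 X Y"
  shows "(m = 1 \<longrightarrow>
            (\<exists>lO lE :: real. lO \<ge> 0 \<and> lE \<ge> 0 \<and> lO + lE = 1 \<and>
               lE / 2 \<ge> 1 - 2 / (b * v1) \<and>
               lE / 2 \<le> 1 / b - 2 / (b * v1) \<and>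
               (\<forall>k. pmf Y k = (1 - b / real m) * (if k = 0 then 1 else 0)
                    + b / real m * (lO * U_O 1 k + lE * U_E 1 k))))
       \<and> (m \<ge> 2 \<longrightarrow>
            (\<exists>lO lE lOu :: real. \<exists>l :: nat \<Rightarrow> real.
               lO \<ge> 0 \<and> lE \<ge> 0 \<and> lOu \<ge> 0 \<and> (\<forall>j\<in>{1..m-1}. l j \<ge> 0) \<and>
               lO + lE + lOu + (\<Sum>j=1..m-1. l j) = 1 \<and>
               lE / real (m + 1) + 1 / (2 * real m) * (\<Sum>j=1..m-1. l j)
                 \<le> real m / b * (1 - v2 / v1) \<and>
               lO / real m + lE / real (m + 1) + lOu / (real m - 1)
                 + 1 / real m * (\<Sum>j=1..m-1. l j) = 2 * real m / (b * v1) \<and>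
               (b > real m - 1 \<longrightarrow>
                  1 / (2 * real m) * (\<Sum>j=1..m-1. l j) + lOu / (real m - 1)
                    \<le> (real m - b) / b) \<and>
               (\<forall>k. pmf Y k = (1 - b / real m) * (if k = 0 then 1 else 0)
                    + b / real m * (lO * U_O m k + lE * U_E m k + lOu * U_Oup1 m k
                                    + (\<Sum>j=1..m-1. l j * W m j k)))))"
proof -
  note v12 = assms(1) and v2p = assms(2) and m1 = assms(3) and b0 = assms(4) and bm = assms(5)
    and mX = assms(6) and mY = assms(7)
  have v1p: "v1 > 0" using v12 v2p by simp
  have sX: "strategy X" and sY: "strategy Y"
    and br1: "\<And>X'. strategy X' \<Longrightarrow> payoff v1 X Y \<ge> payoff v1 X' Y"
    and br2: "\<And>Y'. strategy Y' \<Longrightarrow> payoff v2 Y X \<ge> payoff v2 Y' X"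
    using assms(8) unfolding nash_eq_def by auto
  define al where "al = payoff v1 X Y"
  define be where "be = payoff v2 Y X"
  have fle: "v1 * Fm Y k - real k \<le> al" for k
    using br1[OF strategy_return[of k]] unfolding al_def payoff_return .
  have gle: "v2 * Fm X k - real k \<le> be" for k
    using br2[OF strategy_return[of k]] unfolding be_def payoff_return .
  have suppX: "v1 * Fm Y x - real x = al" if "x \<in> set_pmf X" for x
    by (rule support_opt[OF sX _ _ integrable_f[OF sX] that])
       (use fle in auto, simp add: al_def payoff_expect[OF sX])
  have suppY: "v2 * Fm X y - real y = be" if "y \<in> set_pmf Y" for y
    by (rule support_opt[OF sY _ _ integrable_f[OF sY] that])
       (use gle in auto, simp add: be_def payoff_expect[OF sY])
  have ceq: "v2 * real m + v1 * b + v2 * al + v1 * be = v1 * v2"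
  proof -
    let ?w1 = "measure_pmf.prob (pair_pmf X Y) {(x, y). x > y} + measure_pmf.prob (pair_pmf X Y) {(x, y). x = y} / 2"
    let ?w2 = "measure_pmf.prob (pair_pmf Y X) {(x, y). x > y} + measure_pmf.prob (pair_pmf Y X) {(x, y). x = y} / 2"
    have w: "?w1 + ?w2 = 1" using win_sum[of X Y] by simp
    have a1: "al + real m = v1 * ?w1" unfolding al_def payoff_def mX by (simp add: algebra_simps)
    have a2: "be + b = v2 * ?w2" unfolding be_def payoff_def mY by (simp add: algebra_simps)
    have "v2 * (al + real m) + v1 * (be + b) = v1 * v2 * (?w1 + ?w2)"
      unfolding a1 a2 by (simp add: algebra_simps)
    then show ?thesis unfolding w by (simp add: algebra_simps)
  qed
  have "0 \<le> v1 * Fm Y 0" using v1p Fm_bounds(1)[of Y 0] by simp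
  then have al0: "al \<ge> 0" using fle[of 0] by simp
  have "0 \<le> v2 * Fm X 0" using v2p Fm_bounds(1)[of X 0] by simp
  then have be0: "be \<ge> 0" using gle[of 0] by simp
  have Fx: "Fm X k \<le> (be + real k) / v2" for k
    using gle[of k] v2p by (simp add: field_simps)
  have Fy: "Fm Y k \<le> (al + real k) / v1" for k
    using fle[of k] v1p by (simp add: field_simps)
  have aa: "v2 \<le> 2*be + 2*real m"
  proof -
    have "(\<Sum>i<Suc m. (1 - (be + 2 * real i) / v2)) \<le> (\<Sum>i<Suc m. (1 - Fm X (2*i)))"
    proof (intro sum_mono)
      fix i show "1 - (be + 2 * real i) / v2 \<le> 1 - Fm X (2 * i)" using Fx[of "2*i"] by simp
    qed
    also have "2 * \<dots> \<le> real m + 1" using even_ineq[OF sX, of m] mX by simp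
    finally have "2 * (\<Sum>i<Suc m. (1 - (be + 2 * real i) / v2)) \<le> real m + 1" by simp
    then have "2 * (real m + 1 - ((real m + 1) * be + (real m + 1) * real m) / v2) \<le> real m + 1"
      unfolding sum_lin by (simp add: algebra_simps)
    then have "2 * ((real m + 1) * v2 - ((real m + 1) * be + (real m + 1) * real m)) \<le> (real m + 1) * v2"
      using v2p by (simp add: field_simps)
    then have "(real m + 1) * (2 * v2 - 2*be - 2*real m) \<le> (real m + 1) * v2" by (simp add: algebra_simps)
    moreover have "real m + 1 > 0" by simp
    ultimately have "2 * v2 - 2*be - 2*real m \<le> v2" by (simp only: mult_le_cancel_left_pos)
    then show ?thesis by simp
  qed
  have bb: "v1*b \<ge> 2*real m*(v1 - al) - 2*(real m)^2"
  proof -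
    have "(\<Sum>i<m. (1 - ((al + 1) + 2 * real i) / v1)) \<le> (\<Sum>i<m. (1 - Fm Y (2*i+1)))"
    proof (intro sum_mono)
      fix i show "1 - ((al + 1) + 2 * real i) / v1 \<le> 1 - Fm Y (2 * i + 1)"
        using Fy[of "2*i+1"] by (simp add: algebra_simps)
    qed
    also have "2 * \<dots> \<le> b" using odd_ineq[OF sY, of m] mY by simp
    finally have "2 * (\<Sum>i<m. (1 - ((al + 1) + 2 * real i) / v1)) \<le> b" by simp
    then have "2 * (real m - (real m * (al + 1) + real m * (real m - 1)) / v1) \<le> b"
      unfolding sum_lin by simp
    then have "2 * (real m * v1 - (real m * (al + 1) + real m * (real m - 1))) \<le> b * v1"
      using v1p by (simp add: field_simps)
    then show ?thesis by (simp add: algebra_simps power2_eq_square)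
  qed
  have key: "be = 0 \<and> v2 = 2 * real m"
    by (rule key_alg[OF v1p v2p al0 be0 b0 bm aa bb ceq])
  then have be00: "be = 0" and v2m: "v2 = 2 * real m" by auto
  have m0: "real m > 0" using m1 by simp
  have FxE: "Fm X (2*i) = real i / real m" if "i \<le> m" for i
  proof -
    define t where "t i = (1 - Fm X (2*i)) - (1 - (0 + 2 * real i) / v2)" for i
    have tnn: "\<forall>i\<in>{..<Suc m}. t i \<ge> 0"
    proof
      fix i show "t i \<ge> 0" using Fx[of "2*i"] be00 unfolding t_def by (simp add: algebra_simps)
    qed
    have s1: "(\<Sum>i<Suc m. (1 - (0 + 2 * real i) / v2)) = (real m + 1) / 2"
      unfolding sum_lin v2m using m0 by (simp add: field_simps)
    have s2: "2 * (\<Sum>i<Suc m. (1 - Fm X (2*i))) \<le> real m + 1" using even_ineq[OF sX, of m] mX by simp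
    have "(\<Sum>i<Suc m. t i) = (\<Sum>i<Suc m. (1 - Fm X (2*i))) - (\<Sum>i<Suc m. (1 - (0 + 2 * real i) / v2))"
      unfolding t_def by (simp add: sum_subtractf)
    then have "(\<Sum>i<Suc m. t i) \<le> 0" using s1 s2 by simp
    moreover have "(\<Sum>i<Suc m. t i) \<ge> 0" by (rule sum_nonneg) (use tnn in auto)
    ultimately have "(\<Sum>i<Suc m. t i) = 0" by simp
    then have "t i = 0" using tnn that by (subst (asm) sum_nonneg_eq_0_iff) auto
    then show ?thesis unfolding t_def v2m using m0 by (simp add: field_simps)
  qed
  have FxO: "Fm X (2*i+1) = (2 * real i + 1) / (2 * real m)" if "i < m" for i
  proof -
    define t where "t i = (1 - Fm X (2*i+1)) - (1 - (1 + 2 * real i) / v2)" for i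
    have tnn: "\<forall>i\<in>{..<m}. t i \<ge> 0"
    proof
      fix i show "t i \<ge> 0" using Fx[of "2*i+1"] be00 unfolding t_def by (simp add: algebra_simps)
    qed
    have s1: "(\<Sum>i<m. (1 - (1 + 2 * real i) / v2)) = real m / 2"
      unfolding sum_lin v2m using m0 by (simp add: field_simps)
    have s2: "2 * (\<Sum>i<m. (1 - Fm X (2*i+1))) \<le> real m" using odd_ineq[OF sX, of m] mX by simp
    have "(\<Sum>i<m. t i) = (\<Sum>i<m. (1 - Fm X (2*i+1))) - (\<Sum>i<m. (1 - (1 + 2 * real i) / v2))"
      unfolding t_def by (simp add: sum_subtractf)
    then have "(\<Sum>i<m. t i) \<le> 0" using s1 s2 by simp
    moreover have "(\<Sum>i<m. t i) \<ge> 0" by (rule sum_nonneg) (use tnn in auto)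
    ultimately have "(\<Sum>i<m. t i) = 0" by simp
    then have "t i = 0" using tnn that by (subst (asm) sum_nonneg_eq_0_iff) auto
    then show ?thesis unfolding t_def v2m using m0 by (simp add: field_simps)
  qed
  have FxAll: "Fm X k = real k / (2 * real m)" if "k \<le> 2*m" for k
  proof (cases "even k")
    case True
    then obtain i where "k = 2*i" by (auto elim: evenE)
    then show ?thesis using FxE[of i] that m0 by (simp add: field_simps)
  next
    case False
    then obtain i where "k = 2*i+1" by (auto elim: oddE)
    then show ?thesis using FxO[of i] that by simp
  qed
  have pX: "pmf X k = (if odd k then 1 / real m else 0)" if "k \<le> 2*m" for k
    using that
  proof (induction k)
    case 0
    then show ?case using FxAll[of 0] Fm_zero[of X] by simp
  next
    case (Suc k)
    have "Fm X (Suc k) = Fm X k + (pmf X k + pmf X (Suc k)) / 2" by (rule Fm_step)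
    then have "pmf X (Suc k) = 2 * (Fm X (Suc k) - Fm X k) - pmf X k" by (simp add: field_simps)
    also have "\<dots> = 2 * (real (Suc k) / (2 * real m) - real k / (2 * real m)) - pmf X k"
      using FxAll[of k] FxAll[of "Suc k"] Suc.prems by simp
    also have "\<dots> = 1 / real m - pmf X k" using m0 by (simp add: field_simps)
    finally show ?case using Suc by auto
  qed
  have fX: "v1 * Fm Y (2*i+1) - real (2*i+1) = al" if "i < m" for i
  proof -
    have "pmf X (2*i+1) = 1 / real m" using pX[of "2*i+1"] that by simp
    then have "2*i+1 \<in> set_pmf X" using m0 by (simp add: set_pmf_iff)
    then show ?thesis by (rule suppX)
  qed
  have Ysupp: "y \<le> 2*m" if "y \<in> set_pmf Y" for y
  proof -
    have "v2 * Fm X y - real y = 0" using suppY[OF that] be00 by simp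
    then have "real y = 2 * real m * Fm X y" using v2m by simp
    also have "\<dots> \<le> 2 * real m * 1" using Fm_bounds(2)[of X y] m0 by (intro mult_left_mono) auto
    finally show ?thesis by simp
  qed
  define q where "q k = pmf Y k" for k
  have qnn: "q k \<ge> 0" for k unfolding q_def by simp
  have qz: "q k = 0" if "k > 2*m" for k
    using Ysupp that unfolding q_def by (meson not_le set_pmf_iff)
  have FyTop: "Fm Y (2*m) = 1 - q (2*m) / 2" unfolding q_def by (rule Fm_top[OF Ysupp])
  have alv: "al = v1 - real m - v1*b/(2*real m)"
  proof -
    have "2 * real m * al = 2 * real m * v1 - 2 * real m * real m - v1 * b"
      using ceq be00 v2m by (simp add: algebra_simps)
    then show ?thesis using m0 by (simp add: field_simps)
  qed
  have stepY: "Fm Y (Suc k) = Fm Y k + (q k + q (Suc k)) / 2" for k unfolding q_def by (rule Fm_step)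
  have E: "q(2*i-1) + 2*q(2*i) + q(2*i+1) = 4/v1" if "1 \<le> i" "i < m" for i
  proof -
    have a: "v1 * Fm Y (2*i+1) - real (2*i+1) = al" using fX[of i] that by simp
    have b': "v1 * Fm Y (2*(i-1)+1) - real (2*(i-1)+1) = al" using fX[of "i-1"] that by simp
    have e1: "2*(i-1)+1 = 2*i-1" "Suc (2*i-1) = 2*i" "Suc (2*i) = 2*i+1" using that by auto
    have "Fm Y (2*i+1) = Fm Y (2*i-1) + (q(2*i-1) + q(2*i))/2 + (q(2*i) + q(2*i+1))/2"
      using stepY[of "2*i-1"] stepY[of "2*i"] unfolding e1 by simp
    then have "v1 * ((q(2*i-1) + q(2*i))/2 + (q(2*i) + q(2*i+1))/2) = 2"
      using a b' unfolding e1 using that by (simp add: algebra_simps)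
    then show ?thesis using v1p by (simp add: field_simps)
  qed
  have I: "q(2*i-1) + q(2*i) \<le> 2/v1" if "1 \<le> i" "i \<le> m" for i
  proof -
    have b': "v1 * Fm Y (2*(i-1)+1) - real (2*(i-1)+1) = al" using fX[of "i-1"] that by simp
    have e1: "2*(i-1)+1 = 2*i-1" "Suc (2*i-1) = 2*i" using that by auto
    have "Fm Y (2*i) = Fm Y (2*i-1) + (q(2*i-1) + q(2*i))/2"
      using stepY[of "2*i-1"] unfolding e1 by simp
    then have h: "v1 * Fm Y (2*i) = v1 * Fm Y (2*i-1) + v1 * ((q(2*i-1) + q(2*i))/2)"
      by (simp add: distrib_left)
    have r: "real (2*i-1) = real (2*i) - 1" using that by simp
    have "v1 * ((q(2*i-1) + q(2*i))/2) \<le> 1"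
      using fle[of "2*i"] b' h r unfolding e1 by linarith
    then show ?thesis using v1p by (simp add: field_simps)
  qed
  have Q1: "v1*(q 0 + q 1/2) - 1 = al"
  proof -
    have "Fm Y 1 = q 0 + q 1 / 2" using stepY[of 0] Fm_zero[of Y] unfolding q_def by (simp add: field_simps)
    then show ?thesis using fX[of 0] m1 by simp
  qed
  have Qc: "v1*(1 - q(2*m) - q(2*m-1)/2) - (2*real m-1) = al"
  proof -
    have e1: "2*(m-1)+1 = 2*m-1" "Suc (2*m-1) = 2*m" using m1 by auto
    have "Fm Y (2*m) = Fm Y (2*m-1) + (q(2*m-1) + q(2*m))/2"
      using stepY[of "2*m-1"] unfolding e1 by simp
    then have "Fm Y (2*m-1) = 1 - q(2*m) - q(2*m-1)/2" using FyTop by (simp add: field_simps)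
    moreover have "real (2*m-1) = 2*real m - 1" using m1 by simp
    ultimately show ?thesis using fX[of "m-1"] m1 unfolding e1 by simp
  qed
  have F0: "v1*q 0/2 \<le> al" using fle[of 0] Fm_zero[of Y] unfolding q_def by simp
  show ?thesis
  proof (intro conjI impI)
    assume m1': "m = 1"
    have "\<exists>lO lE :: real. lO \<ge> 0 \<and> lE \<ge> 0 \<and> lO + lE = 1 \<and>
               lE / 2 \<ge> 1 - 2 / (b * v1) \<and>
               lE / 2 \<le> 1 / b - 2 / (b * v1) \<and>
               (\<forall>k. q k = (1 - b / real m) * (if k = 0 then 1 else 0)
                    + b / real m * (lO * U_O 1 k + lE * U_E 1 k))"
    proof (rule alg_one[OF m1' v1p b0 qnn])
      show "\<And>k. 2 < k \<Longrightarrow> q k = 0" using qz m1' by simp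
      show "al = v1 - 1 - v1 * b / 2" using alv m1' by simp
      show "q 1 + q 2 \<le> 2 / v1" using I[of 1] m1' by simp
      show "v1 * (q 0 + q 1 / 2) - 1 = al" by (rule Q1)
      show "v1 * (1 - q 2 - q 1 / 2) - 1 = al" using Qc m1' by simp
      show "v1 * q 0 / 2 \<le> al" by (rule F0)
    qed
    then show "\<exists>lO lE :: real. lO \<ge> 0 \<and> lE \<ge> 0 \<and> lO + lE = 1 \<and>
               lE / 2 \<ge> 1 - 2 / (b * v1) \<and>
               lE / 2 \<le> 1 / b - 2 / (b * v1) \<and>
               (\<forall>k. pmf Y k = (1 - b / real m) * (if k = 0 then 1 else 0)
                    + b / real m * (lO * U_O 1 k + lE * U_E 1 k))" unfolding q_def .
  next
    assume m2: "m \<ge> 2"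
    have "\<exists>lO lE lOu :: real. \<exists>l :: nat \<Rightarrow> real.
               lO \<ge> 0 \<and> lE \<ge> 0 \<and> lOu \<ge> 0 \<and> (\<forall>j\<in>{1..m-1}. l j \<ge> 0) \<and>
               lO + lE + lOu + (\<Sum>j=1..m-1. l j) = 1 \<and>
               lE / real (m + 1) + 1 / (2 * real m) * (\<Sum>j=1..m-1. l j)
                 \<le> real m / b * (1 - (2 * real m) / v1) \<and>
               lO / real m + lE / real (m + 1) + lOu / (real m - 1)
                 + 1 / real m * (\<Sum>j=1..m-1. l j) = 2 * real m / (b * v1) \<and>
               (b > real m - 1 \<longrightarrow>
                  1 / (2 * real m) * (\<Sum>j=1..m-1. l j) + lOu / (real m - 1)
                    \<le> (real m - b) / b) \<and>
               (\<forall>k. q k = (1 - b / real m) * (if k = 0 then 1 else 0)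
                    + b / real m * (lO * U_O m k + lE * U_E m k + lOu * U_Oup1 m k
                                    + (\<Sum>j=1..m-1. l j * W m j k)))"
      by (rule alg_main[OF v1p m2 b0 qnn qz alv E I Q1 Qc F0])
    then show "\<exists>lO lE lOu :: real. \<exists>l :: nat \<Rightarrow> real.
               lO \<ge> 0 \<and> lE \<ge> 0 \<and> lOu \<ge> 0 \<and> (\<forall>j\<in>{1..m-1}. l j \<ge> 0) \<and>
               lO + lE + lOu + (\<Sum>j=1..m-1. l j) = 1 \<and>
               lE / real (m + 1) + 1 / (2 * real m) * (\<Sum>j=1..m-1. l j)
                 \<le> real m / b * (1 - v2 / v1) \<and>
               lO / real m + lE / real (m + 1) + lOu / (real m - 1)
                 + 1 / real m * (\<Sum>j=1..m-1. l j) = 2 * real m / (b * v1) \<and>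
               (b > real m - 1 \<longrightarrow>
                  1 / (2 * real m) * (\<Sum>j=1..m-1. l j) + lOu / (real m - 1)
                    \<le> (real m - b) / b) \<and>
               (\<forall>k. pmf Y k = (1 - b / real m) * (if k = 0 then 1 else 0)
                    + b / real m * (lO * U_O m k + lE * U_E m k + lOu * U_Oup1 m k
                                    + (\<Sum>j=1..m-1. l j * W m j k)))"
      unfolding q_def v2m .
  qed
qed

end
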